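(* Let $p\ge5$ be a prime. Every finite subgroup of $\mathrm{D}(p,\mathbb{C})$ that is invariant under conjugation by $\mathrm{Alt}(p)$ is invariant under conjugation by $\mathrm{Sym}(p)$.
   Context: $\mathrm{D}(p,\mathbb{C})$ is the group of invertible diagonal $p\times p$ matrices; $\mathrm{Sym}(p)$ is identified with the group of permutation matrices via $\alpha\mapsto[\delta_{i\alpha,j}]_{i,j}$, and $\mathrm{Alt}(p)$ with its subgroup of even permutations. *)

theory Defs
  imports Complex_Main "Jordan_Normal_Form.Matrix" "HOL-Combinatorics.Permutations"
begin

definition diag_inv_mats :: "nat \<Rightarrow> complex mat set" where
  "diag_inv_mats p = {D. D \<in> carrier_mat p p \<and> diagonal_mat D \<and> invertible_mat D}"

definition is_subgroup_D :: "nat \<Rightarrow> complex mat set \<Rightarrow> bool" where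
  "is_subgroup_D p H \<longleftrightarrow> H \<subseteq> diag_inv_mats p \<and> 1\<^sub>m p \<in> H
     \<and> (\<forall>A\<in>H. \<forall>B\<in>H. A * B \<in> H)
     \<and> (\<forall>A\<in>H. \<exists>B\<in>H. A * B = 1\<^sub>m p \<and> B * A = 1\<^sub>m p)"

definition perm_mat :: "nat \<Rightarrow> (nat \<Rightarrow> nat) \<Rightarrow> complex mat" where
  "perm_mat p a = mat p p (\<lambda>(i,j). if a i = j then 1 else 0)"

text \<open>H is invariant under conjugation by the permutation matrix of alpha
  (P_alpha^{-1} = P_{alpha^{-1}}).\<close>
definition conj_invariant :: "nat \<Rightarrow> (nat \<Rightarrow> nat) \<Rightarrow> complex mat set \<Rightarrow> bool" where
  "conj_invariant p a H \<longleftrightarrow>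
     (\<lambda>D. perm_mat p a * D * perm_mat p (inv_into UNIV a)) ` H = H"

end

theory Submission imports Defs begin

lemma perm_mat_left:
  assumes "a permutes {..<p}" "D \<in> carrier_mat p n" "i < p" "l < n"
  shows "(perm_mat p a * D) $$ (i,l) = D $$ (a i, l)"
proof -
  have ai: "a i < p" using assms by (meson lessThan_iff permutes_in_image)
  have "(perm_mat p a * D) $$ (i,l) = (\<Sum>k\<in>{0..<p}. (if a i = k then 1 else 0) * D $$ (k,l))"
    using assms unfolding perm_mat_def by (simp add: scalar_prod_def)
  also have "\<dots> = D $$ (a i, l)"
    using ai by (simp add: sum.delta if_distrib[of "\<lambda>x. x * _"] cong: if_cong)
  finally show ?thesis .
qed

lemma perm_mat_right:
  assumes "a permutes {..<p}" "D \<in> carrier_mat n p" "i < n" "j < p"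
  shows "(D * perm_mat p (inv_into UNIV a)) $$ (i,j) = D $$ (i, a j)"
proof -
  have aj: "a j < p" using assms by (meson lessThan_iff permutes_in_image)
  have iv: "\<And>k. (inv_into UNIV a k = j) = (k = a j)"
    using assms(1) by (metis permutes_inverses(1) permutes_inverses(2))
  have "(D * perm_mat p (inv_into UNIV a)) $$ (i,j) = (\<Sum>k\<in>{0..<p}. D $$ (i,k) * (if inv_into UNIV a k = j then 1 else 0))"
    using assms unfolding perm_mat_def by (simp add: scalar_prod_def)
  also have "\<dots> = D $$ (i, a j)"
    using aj by (simp add: iv sum.delta if_distrib[of "\<lambda>x. _ * x"] cong: if_cong)
  finally show ?thesis .
qed

lemma conj_eq:
  assumes "a permutes {..<p}" "D \<in> carrier_mat p p"
  shows "perm_mat p a * D * perm_mat p (inv_into UNIV a) = mat p p (\<lambda>(i,j). D $$ (a i, a j))"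
proof (rule eq_matI)
  have c: "perm_mat p a * D \<in> carrier_mat p p" using assms unfolding perm_mat_def by auto
  fix i j assume "i < dim_row (mat p p (\<lambda>(i,j). D $$ (a i, a j)))" "j < dim_col (mat p p (\<lambda>(i,j). D $$ (a i, a j)))"
  hence ij: "i < p" "j < p" by auto
  have aj: "a j < p" using assms ij by (meson lessThan_iff permutes_in_image)
  show "(perm_mat p a * D * perm_mat p (inv_into UNIV a)) $$ (i, j) = mat p p (\<lambda>(i,j). D $$ (a i, a j)) $$ (i, j)"
    using perm_mat_right[OF assms(1) c ij] perm_mat_left[OF assms(1,2) ij(1) aj] ij by simp
qed (use assms in \<open>auto simp: perm_mat_def\<close>)


lemma tau_closed:
  fixes F :: "(nat \<Rightarrow> complex) set"
  assumes p5: "p \<ge> 5"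
    and mult: "\<And>f g. f \<in> F \<Longrightarrow> g \<in> F \<Longrightarrow> (\<lambda>i. f i * g i) \<in> F"
    and inv: "\<And>f. f \<in> F \<Longrightarrow> (\<lambda>i. inverse (f i)) \<in> F"
    and even: "\<And>f s. f \<in> F \<Longrightarrow> s permutes {..<p} \<Longrightarrow> evenperm s \<Longrightarrow> f \<circ> s \<in> F"
    and nz: "\<And>f i. f \<in> F \<Longrightarrow> i < p \<Longrightarrow> f i \<noteq> 0"
    and ext: "\<And>f g. f \<in> F \<Longrightarrow> (\<forall>i<p. f i = g i) \<Longrightarrow> g \<in> F"
    and fF: "f \<in> F"
  shows "f \<circ> transpose 0 1 \<in> F"
proof -
  have ev: "transpose a b \<circ> transpose b c permutes {..<p} \<and> evenperm (transpose a b \<circ> transpose b c)"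
    if "a < p" "b < p" "c < p" "a \<noteq> b" "b \<noteq> c" for a b c :: nat
    using that by (simp add: permutes_compose permutes_swap_id evenperm_comp permutation_swap_id evenperm_swap)
  define s1 where "s1 = transpose (0::nat) 2 \<circ> transpose 2 1"
  define r where "r = transpose (1::nat) 3 \<circ> transpose 3 4"
  define g where "g = transpose (0::nat) 1 \<circ> transpose 1 2"
  have s1: "s1 permutes {..<p}" "evenperm s1" using ev[of 0 2 1] p5 unfolding s1_def by auto
  have r: "r permutes {..<p}" "evenperm r" using ev[of 1 3 4] p5 unfolding r_def by auto
  have g: "g permutes {..<p}" "evenperm g" using ev[of 0 1 2] p5 unfolding g_def by auto
  define z where "z = (\<lambda>i. f i * inverse ((f \<circ> s1) i))"
  have zF: "z \<in> F" unfolding z_def using fF s1 by (intro mult inv even) auto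
  define y where "y = (\<lambda>i. z i * inverse ((z \<circ> r) i))"
  have yF: "y \<in> F" unfolding y_def using zF r by (intro mult inv even) auto
  define w where "w = (\<lambda>i. (y \<circ> g) i * inverse (y i))"
  have wF: "w \<in> F" unfolding w_def using yF g by (intro mult inv even) auto
  have fw: "(\<lambda>i. f i * w i) \<in> F" using fF wF by (rule mult)
  have nzf: "\<And>i. i < p \<Longrightarrow> f i \<noteq> 0" using nz fF by auto
  have f0: "f 0 \<noteq> 0" "f 1 \<noteq> 0" "f 2 \<noteq> 0" "f 3 \<noteq> 0" "f 4 \<noteq> 0" using nzf p5 by auto
  have "\<forall>i<p. f i * w i = (f \<circ> transpose 0 1) i"
  proof (intro allI impI)
    fix i assume ip: "i < p"
    consider "i = 0" | "i = 1" | "i = 2" | "i = 3" | "i = 4" | "i \<ge> 5" by linarith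
    then show "f i * w i = (f \<circ> transpose 0 1) i"
    proof cases
      case 6
      then show ?thesis using nzf[OF ip]
        by (simp add: w_def y_def z_def s1_def r_def g_def transpose_def)
    qed (use f0 in \<open>simp_all add: w_def y_def z_def s1_def r_def g_def transpose_def field_simps\<close>)
  qed
  then show ?thesis using ext[OF fw] by blast
qed


definition dm :: "nat \<Rightarrow> (nat \<Rightarrow> complex) \<Rightarrow> complex mat" where
  "dm p f = mat p p (\<lambda>(i,j). if i = j then f i else 0)"

lemma dm_carrier[simp]: "dm p f \<in> carrier_mat p p"
  unfolding dm_def by simp

lemma dm_idx: "i < p \<Longrightarrow> dm p f $$ (i,i) = f i"
  unfolding dm_def by simp

lemma dm_ext: "(\<forall>i<p. f i = g i) \<Longrightarrow> dm p f = dm p g"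
  unfolding dm_def by (rule eq_matI) auto

lemma diag_dm:
  assumes "D \<in> diag_inv_mats p"
  shows "D = dm p (\<lambda>i. D $$ (i,i))"
  using assms unfolding diag_inv_mats_def diagonal_mat_def dm_def
  by (intro eq_matI) auto

lemma dm_mult: "dm p f * dm p g = dm p (\<lambda>i. f i * g i)"
proof (rule eq_matI)
  fix i j assume "i < dim_row (dm p (\<lambda>i. f i * g i))" "j < dim_col (dm p (\<lambda>i. f i * g i))"
  hence ij: "i < p" "j < p" by (auto simp: dm_def)
  have "(dm p f * dm p g) $$ (i,j) = (\<Sum>k\<in>{0..<p}. (if i = k then f i else 0) * (if k = j then g k else 0))"
    using ij by (simp add: dm_def scalar_prod_def)
  also have "\<dots> = (\<Sum>k\<in>{0..<p}. if k = i then (if i = j then f i * g i else 0) else 0)"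
    by (rule sum.cong) auto
  also have "\<dots> = dm p (\<lambda>i. f i * g i) $$ (i,j)"
    using ij by (simp add: dm_def)
  finally show "(dm p f * dm p g) $$ (i,j) = dm p (\<lambda>i. f i * g i) $$ (i,j)" .
qed (auto simp: dm_def)

lemma dm_one: "1\<^sub>m p = dm p (\<lambda>_. 1)"
  unfolding dm_def by (rule eq_matI) auto

lemma conj_dm:
  assumes "a permutes {..<p}"
  shows "perm_mat p a * dm p f * perm_mat p (inv_into UNIV a) = dm p (f \<circ> a)"
proof -
  have inj: "\<And>i j. (a i = a j) = (i = j)" using assms by (meson permutes_inj injD)
  have lt: "\<And>i. i < p \<Longrightarrow> a i < p" using assms by (meson lessThan_iff permutes_in_image)
  show ?thesis
    unfolding conj_eq[OF assms dm_carrier]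
    by (rule eq_matI) (auto simp: dm_def lt inj)
qed

theorem proposition8p1:
  fixes p :: nat and H :: "complex mat set"
  assumes "prime p" and "p \<ge> 5"
    and "is_subgroup_D p H" and "finite H"
    and "\<And>a. a permutes {..<p} \<Longrightarrow> evenperm a \<Longrightarrow> conj_invariant p a H"
  shows "\<And>a. a permutes {..<p} \<Longrightarrow> conj_invariant p a H"
proof -
  note sg = assms(3)[unfolded is_subgroup_D_def]
  define F where "F = {f. dm p f \<in> H}"
  have HF: "\<And>D. D \<in> H \<Longrightarrow> \<exists>f\<in>F. D = dm p f"
    using sg diag_dm unfolding F_def by (metis (no_types, lifting) mem_Collect_eq subsetD)
  have mult: "\<And>f g. f \<in> F \<Longrightarrow> g \<in> F \<Longrightarrow> (\<lambda>i. f i * g i) \<in> F"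
    unfolding F_def using sg dm_mult by (metis mem_Collect_eq)
  have ext: "\<And>f g. f \<in> F \<Longrightarrow> (\<forall>i<p. f i = g i) \<Longrightarrow> g \<in> F"
    unfolding F_def using dm_ext by (metis mem_Collect_eq)
  have invex: "\<exists>g\<in>F. \<forall>i<p. f i * g i = 1" if fF: "f \<in> F" for f
  proof -
    obtain B where B: "B \<in> H" "dm p f * B = 1\<^sub>m p" using sg fF unfolding F_def by auto
    obtain g where g: "g \<in> F" "B = dm p g" using HF B(1) by auto
    have "dm p (\<lambda>i. f i * g i) = dm p (\<lambda>_. 1)" using B g dm_mult dm_one by metis
    hence "\<forall>i<p. f i * g i = 1" by (metis dm_idx)
    thus ?thesis using g by auto
  qed
  have nz: "\<And>f i. f \<in> F \<Longrightarrow> i < p \<Longrightarrow> f i \<noteq> 0"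
    using invex by (metis mult_zero_left zero_neq_one)
  have inv: "\<And>f. f \<in> F \<Longrightarrow> (\<lambda>i. inverse (f i)) \<in> F"
  proof -
    fix f assume f: "f \<in> F"
    obtain g where g: "g \<in> F" "\<forall>i<p. f i * g i = 1" using invex[OF f] by auto
    have "\<forall>i<p. g i = inverse (f i)" using g(2) by (metis inverse_unique)
    thus "(\<lambda>i. inverse (f i)) \<in> F" using ext[OF g(1)] by auto
  qed
  have even: "\<And>f s. f \<in> F \<Longrightarrow> s permutes {..<p} \<Longrightarrow> evenperm s \<Longrightarrow> f \<circ> s \<in> F"
  proof -
    fix f s assume f: "f \<in> F" and s: "s permutes {..<p}" "evenperm s"
    have "(\<lambda>D. perm_mat p s * D * perm_mat p (inv_into UNIV s)) ` H = H"
      using assms(5)[OF s] unfolding conj_invariant_def .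
    hence "perm_mat p s * dm p f * perm_mat p (inv_into UNIV s) \<in> H" using f unfolding F_def by blast
    thus "f \<circ> s \<in> F" unfolding F_def conj_dm[OF s(1)] by simp
  qed
  have tau: "\<And>f. f \<in> F \<Longrightarrow> f \<circ> transpose 0 1 \<in> F"
  proof -
    fix f assume fF: "f \<in> F"
    show "f \<circ> transpose 0 1 \<in> F"
      apply (rule tau_closed[where F=F and p=p and f=f])
            apply (rule assms(2))
           apply (erule (1) mult)
          apply (erule inv)
         apply (erule (2) even)
        apply (erule (1) nz)
       apply (erule (1) ext)
      apply (rule fF)
      done
  qed
  have allp: "f \<circ> b \<in> F" if f: "f \<in> F" and b: "b permutes {..<p}" for f b
  proof (cases "evenperm b")
    case True thus ?thesis using even f b by blast
  next
    case False
    have t: "transpose (0::nat) 1 permutes {..<p}" using assms(2) by (intro permutes_swap_id) auto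
    have b': "b \<circ> transpose 0 1 permutes {..<p}" using t b by (rule permutes_compose)
    have e': "evenperm (b \<circ> transpose 0 1)"
    proof -
      have pb: "permutation b" using b by (metis finite_lessThan permutation_permutes)
      have "evenperm (b \<circ> transpose 0 1) = (evenperm b = evenperm (transpose (0::nat) 1))"
        using pb permutation_swap_id by (rule evenperm_comp)
      thus ?thesis using False by (simp add: evenperm_swap)
    qed
    have "f \<circ> (b \<circ> transpose 0 1) \<in> F" using even f b' e' by blast
    hence "(f \<circ> (b \<circ> transpose 0 1)) \<circ> transpose 0 1 \<in> F" by (rule tau)
    moreover have "(f \<circ> (b \<circ> transpose 0 1)) \<circ> transpose 0 1 = f \<circ> b"
      by (auto simp: fun_eq_iff)
    ultimately show ?thesis by simp
  qed
  fix a assume a: "a permutes {..<p}"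
  show "conj_invariant p a H"
    unfolding conj_invariant_def
  proof
    show "(\<lambda>D. perm_mat p a * D * perm_mat p (inv_into UNIV a)) ` H \<subseteq> H"
    proof
      fix E assume "E \<in> (\<lambda>D. perm_mat p a * D * perm_mat p (inv_into UNIV a)) ` H"
      then obtain D where D: "D \<in> H" "E = perm_mat p a * D * perm_mat p (inv_into UNIV a)" by auto
      obtain f where f: "f \<in> F" "D = dm p f" using HF D(1) by auto
      have "f \<circ> a \<in> F" using allp f(1) a by blast
      thus "E \<in> H" using D f conj_dm[OF a] unfolding F_def by simp
    qed
  next
    show "H \<subseteq> (\<lambda>D. perm_mat p a * D * perm_mat p (inv_into UNIV a)) ` H"
    proof
      fix D assume D: "D \<in> H"
      obtain f where f: "f \<in> F" "D = dm p f" using HF D by auto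
      have ia: "inv_into UNIV a permutes {..<p}" using a by (rule permutes_inv)
      have "f \<circ> inv_into UNIV a \<in> F" using allp f(1) ia by blast
      hence m: "dm p (f \<circ> inv_into UNIV a) \<in> H" unfolding F_def by simp
      have "(f \<circ> inv_into UNIV a) \<circ> a = f" using a by (simp add: fun_eq_iff permutes_inverses(2))
      hence "D = perm_mat p a * dm p (f \<circ> inv_into UNIV a) * perm_mat p (inv_into UNIV a)"
        using f conj_dm[OF a] by simp
      thus "D \<in> (\<lambda>D. perm_mat p a * D * perm_mat p (inv_into UNIV a)) ` H" using m by blast
    qed
  qed
qed

end
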